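(* Let $v>0$ and let $(a,r,s):\mathbb{R}\to\mathbb{R}^3$ be a solution, not identically constant, of $$\partial_\xi a=r,\qquad \partial_\xi r=-vr-\frac{sa}{2}+\frac{a|r|}{2},\qquad \partial_\xi s=-vs-ra$$ with $(a,r,s)(\xi)\to(a_0,0,0)$ as $\xi\to-\infty$ for some $a_0\in\mathbb{R}$. Then the trajectory is contained in $I_1\cup I_2\cup I_3\cup I_4$, where $I_1=\{r>0,\ s=2r\}$, $I_2=\{r>0,\ s=-r\}$, $I_3=\{r<0,\ s=r\}$, $I_4=\{r<0,\ s=-2r\}$. *)

theory Defs
  imports Complex_Main
begin

end

theory Submission
  imports Defs "HOL-Analysis.Analysis"
begin


lemma left_local_single:
  fixes F :: "real \<Rightarrow> real"
  assumes der: "(F has_real_derivative k * F x) (at x)" and kL: "k < L" and nz: "F x \<noteq> 0"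
  shows "\<exists>d>0. \<forall>z. x - d < z \<and> z < x \<longrightarrow> \<bar>F x\<bar> * exp (-L*x) < \<bar>F z\<bar> * exp (-L*z)"
proof -
  define h where "h = (\<lambda>z. F z * exp (-L*z))"
  have dh: "(h has_real_derivative (k - L) * (F x * exp (-L*x))) (at x)"
  proof -
    have e: "((\<lambda>z. exp (-L*z)) has_real_derivative exp (-L*x) * (-L)) (at x)"
      by (auto intro!: derivative_eq_intros)
    have "(h has_real_derivative (k * F x) * exp (-L*x) + (exp (-L*x) * (-L)) * F x) (at x)"
      unfolding h_def by (rule DERIV_mult[OF der e])
    thus ?thesis by (simp add: algebra_simps)
  qed
  show ?thesis
  proof (cases "F x > 0")
    case True
    have "(k - L) * (F x * exp (-L*x)) < 0" using True kL by (simp add: mult_neg_pos)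
    from DERIV_neg_dec_left[OF dh this] obtain d where d: "d > 0" "\<forall>h'>0. h' < d \<longrightarrow> h x < h (x - h')" by blast
    show ?thesis
    proof (intro exI[of _ d] conjI allI impI)
      fix z assume z: "x - d < z \<and> z < x"
      have "h x < h z" using d(2)[rule_format, of "x - z"] z by simp
      moreover have "h x > 0" using True by (simp add: h_def)
      ultimately have "h z > 0" by linarith
      hence "F z > 0" unfolding h_def by (simp add: zero_less_mult_iff)
      thus "\<bar>F x\<bar> * exp (-L*x) < \<bar>F z\<bar> * exp (-L*z)"
        using \<open>h x < h z\<close> True unfolding h_def by simp
    qed (use d in auto)
  next
    case False
    hence F: "F x < 0" using nz by simp
    have "F x * exp (-L*x) < 0" using F by (simp add: mult_neg_pos)
    hence "(k - L) * (F x * exp (-L*x)) > 0" using kL by (simp add: mult_neg_neg)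
    from DERIV_pos_inc_left[OF dh this] obtain d where d: "d > 0" "\<forall>h'>0. h' < d \<longrightarrow> h (x - h') < h x" by blast
    show ?thesis
    proof (intro exI[of _ d] conjI allI impI)
      fix z assume z: "x - d < z \<and> z < x"
      have "h z < h x" using d(2)[rule_format, of "x - z"] z by simp
      moreover have "h x < 0" using F by (simp add: h_def mult_neg_pos)
      ultimately have "h z < 0" by linarith
      hence "F z < 0" unfolding h_def by (simp add: mult_less_0_iff)
      thus "\<bar>F x\<bar> * exp (-L*x) < \<bar>F z\<bar> * exp (-L*z)"
        using \<open>h z < h x\<close> F unfolding h_def by simp
    qed (use d in auto)
  qed
qed



lemma interval_lemma:
  fixes g :: "real \<Rightarrow> real"
  assumes cont: "continuous_on {lo..hi} g" and le: "lo \<le> hi" and pos: "g hi > 0"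
   and loc: "\<And>x. lo < x \<Longrightarrow> x \<le> hi \<Longrightarrow> g x > 0 \<Longrightarrow> \<exists>d>0. \<forall>z. x - d < z \<and> z < x \<longrightarrow> g x \<le> g z"
  shows "g hi \<le> g lo"
proof -
  define S where "S = {z \<in> {lo..hi}. \<forall>w\<in>{z..hi}. g hi \<le> g w}"
  define t where "t = Inf S"
  have hiS: "hi \<in> S" using le by (auto simp: S_def)
  have bdd: "bdd_below S" by (auto simp: S_def bdd_below_def)
  have tle: "t \<le> hi" using cInf_lower[OF hiS bdd] by (simp add: t_def)
  have tge: "lo \<le> t" using hiS by (auto simp: t_def S_def intro!: cInf_greatest)
  have above: "g hi \<le> g w" if tw: "t < w" "w \<le> hi" for w
  proof -
    obtain z where "z \<in> S" "z < w" using tw hiS by (metis cInf_lessD empty_iff t_def)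
    thus ?thesis using tw by (auto simp: S_def)
  qed
  have gt: "g hi \<le> g t"
  proof (rule ccontr)
    assume "\<not> g hi \<le> g t"
    hence e: "g hi - g t > 0" by simp
    have tin: "t \<in> {lo..hi}" using tle tge by simp
    from cont[unfolded continuous_on_iff, rule_format, OF tin e] obtain d where
      d: "d > 0" "\<forall>x'\<in>{lo..hi}. dist x' t < d \<longrightarrow> dist (g x') (g t) < g hi - g t" by blast
    show False
    proof (cases "t = hi")
      case True thus False using \<open>\<not> g hi \<le> g t\<close> by simp
    next
      case False
      define w where "w = min hi (t + d/2)"
      have w: "t < w" "w \<le> hi" using False tle d(1) unfolding w_def by linarith+
      have "dist w t < d" using w d(1) unfolding w_def dist_real_def by linarith
      moreover have "w \<in> {lo..hi}" using w tge by simp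
      ultimately have "dist (g w) (g t) < g hi - g t" using d(2) by blast
      moreover have "g hi \<le> g w" using above w by auto
      ultimately show False by (simp add: dist_real_def)
    qed
  qed
  have tS: "t \<in> S" unfolding S_def
  proof (safe)
    show "t \<in> {lo..hi}" using tle tge by simp
    fix w assume w: "w \<in> {t..hi}"
    show "g hi \<le> g w"
    proof (cases "w = t")
      case True thus ?thesis using gt by simp
    next
      case False thus ?thesis using w above by simp
    qed
  qed
  show ?thesis
  proof (cases "t = lo")
    case True thus ?thesis using tS by (auto simp: S_def)
  next
    case False
    hence "lo < t" using tge by simp
    have "g t > 0" using gt pos by linarith
    from loc[OF \<open>lo < t\<close> tle this] obtain d where d: "d > 0" "\<forall>z. t - d < z \<and> z < t \<longrightarrow> g t \<le> g z" by blast
    define z where "z = max lo (t - d/2)"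
    have z: "z < t" "lo \<le> z" using \<open>lo < t\<close> d(1) unfolding z_def by linarith+
    have "z \<in> S" unfolding S_def
    proof (safe)
      show "z \<in> {lo..hi}" using z tle by simp
      fix w assume w: "w \<in> {z..hi}"
      show "g hi \<le> g w"
      proof (cases "w < t")
        case True
        have "z \<le> w" using w by simp
        moreover have "t - d < z" using d(1) unfolding z_def by linarith
        ultimately have "t - d < w" by linarith
        hence "g t \<le> g w" using d(2) True by blast
        thus ?thesis using gt by linarith
      next
        case False thus ?thesis using tS w by (auto simp: S_def)
      qed
    qed
    hence "t \<le> z" unfolding t_def by (rule cInf_lower[OF _ bdd])
    thus ?thesis using z by simp
  qed
qed




lemma core_local:
  fixes r F1 F2 Phi :: "real \<Rightarrow> real"
  assumes rc: "isCont r x"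
    and Phi: "\<And>z. Phi z = (if 0 \<le> r z then F1 z else F2 z)"
    and d1: "0 \<le> r x \<Longrightarrow> (F1 has_real_derivative k1 * F1 x) (at x)" and k1: "0 \<le> r x \<Longrightarrow> k1 < L"
    and d2: "r x \<le> 0 \<Longrightarrow> (F2 has_real_derivative k2 * F2 x) (at x)" and k2: "r x \<le> 0 \<Longrightarrow> k2 < L"
    and eq: "r x = 0 \<Longrightarrow> F1 x = F2 x"
    and nz: "Phi x \<noteq> 0"
  shows "\<exists>d>0. \<forall>z. x - d < z \<and> z < x \<longrightarrow> \<bar>Phi x\<bar> * exp (-L*x) \<le> \<bar>Phi z\<bar> * exp (-L*z)"
proof -
  have tl: "(r \<longlongrightarrow> r x) (at x)" using rc by (simp add: isCont_def)
  consider "r x > 0" | "r x < 0" | "r x = 0" by linarith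
  thus ?thesis
  proof cases
    case 1
    have "eventually (\<lambda>z. r z > 0) (at x)" using order_tendstoD(1)[OF tl 1] .
    then obtain e where e: "e > 0" "\<forall>z. z \<noteq> x \<and> dist z x < e \<longrightarrow> r z > 0"
      unfolding eventually_at by blast
    have "F1 x \<noteq> 0" using nz 1 Phi[of x] by simp
    from left_local_single[OF d1 k1 this] 1 obtain d where
      d: "d > 0" "\<forall>z. x - d < z \<and> z < x \<longrightarrow> \<bar>F1 x\<bar> * exp (-L*x) < \<bar>F1 z\<bar> * exp (-L*z)" by auto
    show ?thesis
    proof (intro exI[of _ "min d e"] conjI allI impI)
      fix z assume z: "x - min d e < z \<and> z < x"
      have "r z > 0" using e(2) z by (auto simp: dist_real_def)
      thus "\<bar>Phi x\<bar> * exp (-L*x) \<le> \<bar>Phi z\<bar> * exp (-L*z)"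
        using d(2) z 1 Phi[of x] Phi[of z] by force
    qed (use d e in auto)
  next
    case 2
    have "eventually (\<lambda>z. r z < 0) (at x)" using order_tendstoD(2)[OF tl 2] .
    then obtain e where e: "e > 0" "\<forall>z. z \<noteq> x \<and> dist z x < e \<longrightarrow> r z < 0"
      unfolding eventually_at by blast
    have "F2 x \<noteq> 0" using nz 2 Phi[of x] by simp
    from left_local_single[OF d2 k2 this] 2 obtain d where
      d: "d > 0" "\<forall>z. x - d < z \<and> z < x \<longrightarrow> \<bar>F2 x\<bar> * exp (-L*x) < \<bar>F2 z\<bar> * exp (-L*z)" by auto
    show ?thesis
    proof (intro exI[of _ "min d e"] conjI allI impI)
      fix z assume z: "x - min d e < z \<and> z < x"
      have "r z < 0" using e(2) z by (auto simp: dist_real_def)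
      thus "\<bar>Phi x\<bar> * exp (-L*x) \<le> \<bar>Phi z\<bar> * exp (-L*z)"
        using d(2) z 2 Phi[of x] Phi[of z] by force
    qed (use d e in auto)
  next
    case 3
    have n1: "F1 x \<noteq> 0" using nz 3 Phi[of x] by simp
    have n2: "F2 x \<noteq> 0" using nz 3 Phi[of x] eq by simp
    from left_local_single[OF d1 k1 n1] 3 obtain d where
      d: "d > 0" "\<forall>z. x - d < z \<and> z < x \<longrightarrow> \<bar>F1 x\<bar> * exp (-L*x) < \<bar>F1 z\<bar> * exp (-L*z)" by auto
    from left_local_single[OF d2 k2 n2] 3 obtain e where
      e: "e > 0" "\<forall>z. x - e < z \<and> z < x \<longrightarrow> \<bar>F2 x\<bar> * exp (-L*x) < \<bar>F2 z\<bar> * exp (-L*z)" by auto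
    show ?thesis
    proof (intro exI[of _ "min d e"] conjI allI impI)
      fix z assume z: "x - min d e < z \<and> z < x"
      have "\<bar>F1 x\<bar> * exp (-L*x) < \<bar>F1 z\<bar> * exp (-L*z)" using d(2) z by auto
      moreover have "\<bar>F2 x\<bar> * exp (-L*x) < \<bar>F2 z\<bar> * exp (-L*z)" using e(2) z by auto
      ultimately show "\<bar>Phi x\<bar> * exp (-L*x) \<le> \<bar>Phi z\<bar> * exp (-L*z)"
        using 3 eq Phi[of x] Phi[of z] by (cases "0 \<le> r z") auto
    qed (use d e in auto)
  qed
qed

lemma prop_lemma:
  fixes r F1 F2 Phi k1 k2 :: "real \<Rightarrow> real"
  assumes rc: "\<And>x. isCont r x"
    and Phi: "\<And>z. Phi z = (if 0 \<le> r z then F1 z else F2 z)"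
    and Phic: "continuous_on {lo..hi} Phi" and le: "lo \<le> hi" and nz: "Phi hi \<noteq> 0"
    and d1: "\<And>x. lo < x \<Longrightarrow> x \<le> hi \<Longrightarrow> 0 \<le> r x \<Longrightarrow> (F1 has_real_derivative k1 x * F1 x) (at x) \<and> k1 x < L"
    and d2: "\<And>x. lo < x \<Longrightarrow> x \<le> hi \<Longrightarrow> r x \<le> 0 \<Longrightarrow> (F2 has_real_derivative k2 x * F2 x) (at x) \<and> k2 x < L"
    and eq: "\<And>x. r x = 0 \<Longrightarrow> F1 x = F2 x"
  shows "\<bar>Phi hi\<bar> * exp (-L*hi) \<le> \<bar>Phi lo\<bar> * exp (-L*lo)"
proof (rule interval_lemma[where g = "\<lambda>z. \<bar>Phi z\<bar> * exp (-L*z)"])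
  show "continuous_on {lo..hi} (\<lambda>z. \<bar>Phi z\<bar> * exp (-L*z))"
    by (intro continuous_intros Phic)
  show "lo \<le> hi" by fact
  show "0 < \<bar>Phi hi\<bar> * exp (-L*hi)" using nz by simp
  fix x assume x: "lo < x" "x \<le> hi" "0 < \<bar>Phi x\<bar> * exp (-L*x)"
  have "Phi x \<noteq> 0" using x(3) by auto
  from core_local[where x=x and ?k1.0="k1 x" and ?k2.0="k2 x" and L=L and r=r and Phi=Phi and ?F1.0=F1 and ?F2.0=F2, OF rc Phi _ _ _ _ eq this] d1[OF x(1,2)] d2[OF x(1,2)]
  show "\<exists>d>0. \<forall>z. x - d < z \<and> z < x \<longrightarrow> \<bar>Phi x\<bar> * exp (-L*x) \<le> \<bar>Phi z\<bar> * exp (-L*z)"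
    by blast
qed




lemma phi_zero:
  fixes r F1 F2 Phi k1 k2 :: "real \<Rightarrow> real"
  assumes rc: "\<And>x. isCont r x"
    and Phi: "\<And>z. Phi z = (if 0 \<le> r z then F1 z else F2 z)"
    and Phic: "continuous_on UNIV Phi"
    and d1: "\<And>x. 0 \<le> r x \<Longrightarrow> (F1 has_real_derivative k1 x * F1 x) (at x)"
    and d2: "\<And>x. r x \<le> 0 \<Longrightarrow> (F2 has_real_derivative k2 x * F2 x) (at x)"
    and eq: "\<And>x. r x = 0 \<Longrightarrow> F1 x = F2 x"
    and bnd: "\<And>lo hi. \<exists>L. \<forall>x\<in>{lo..hi}. k1 x < L \<and> k2 x < L"
    and neg: "\<exists>T. \<forall>x\<le>T. k1 x < 0 \<and> k2 x < 0"
    and lim: "(Phi \<longlongrightarrow> 0) at_bot"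
  shows "Phi x = 0"
proof -
  obtain T where T: "\<And>x. x \<le> T \<Longrightarrow> k1 x < 0 \<and> k2 x < 0" using neg by blast
  have low: "Phi y = 0" if y: "y \<le> T" for y
  proof (rule ccontr)
    assume nz: "Phi y \<noteq> 0"
    have ge: "\<bar>Phi y\<bar> \<le> \<bar>Phi z\<bar>" if z: "z \<le> y" for z
      using prop_lemma[where L=0 and lo=z and hi=y, OF rc Phi continuous_on_subset[OF Phic] z nz, of k1 k2] d1 d2 eq T y
      by force
    have "eventually (\<lambda>z. dist (Phi z) 0 < \<bar>Phi y\<bar>) at_bot"
      using lim nz by (simp add: tendsto_iff)
    then obtain N where N: "\<And>z. z \<le> N \<Longrightarrow> \<bar>Phi z\<bar> < \<bar>Phi y\<bar>"
      unfolding eventually_at_bot_linorder by auto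
    have "\<bar>Phi (min N y)\<bar> < \<bar>Phi y\<bar>" using N by simp
    moreover have "\<bar>Phi y\<bar> \<le> \<bar>Phi (min N y)\<bar>" using ge by simp
    ultimately show False by simp
  qed
  show ?thesis
  proof (cases "x \<le> T")
    case True thus ?thesis using low by simp
  next
    case False
    show ?thesis
    proof (rule ccontr)
      assume nz: "Phi x \<noteq> 0"
      obtain L where L: "\<forall>y\<in>{T..x}. k1 y < L \<and> k2 y < L" using bnd by blast
      have "\<bar>Phi x\<bar> * exp (-L*x) \<le> \<bar>Phi T\<bar> * exp (-L*T)"
        using prop_lemma[where L=L and lo=T and hi=x, OF rc Phi continuous_on_subset[OF Phic] _ nz, of k1 k2] d1 d2 eq L False
        by force
      thus False using low[of T] nz by (simp add: mult_le_0_iff)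
    qed
  qed
qed

lemma zero_prop:
  fixes r k :: "real \<Rightarrow> real"
  assumes d: "\<And>z. (r has_real_derivative k z * r z) (at z)"
    and bnd: "\<And>lo hi. \<exists>L. \<forall>z\<in>{lo..hi}. \<bar>k z\<bar> \<le> L"
    and z0: "r x0 = 0"
  shows "r y = 0"
proof (rule ccontr)
  assume nz: "r y \<noteq> 0"
  have rc: "\<And>x. isCont r x" using d by (rule DERIV_isCont)
  show False
  proof (cases "x0 \<le> y")
    case True
    obtain L where L: "\<forall>z\<in>{x0..y}. \<bar>k z\<bar> \<le> L" using bnd by blast
    have "\<bar>r y\<bar> * exp (-(L+1)*y) \<le> \<bar>r x0\<bar> * exp (-(L+1)*x0)"
      apply (rule prop_lemma[where L="L+1" and lo=x0 and hi=y and r=r and ?F1.0=r and ?F2.0=r and ?k1.0=k and ?k2.0=k])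
      using rc True nz d L by (auto intro!: continuous_at_imp_continuous_on) (smt (verit, best) atLeastAtMost_iff)+
    thus False using z0 nz by (simp add: mult_le_0_iff)
  next
    case False
    define rho where "rho = (\<lambda>z. r (-z))"
    have dr: "(rho has_real_derivative (- k (-z)) * rho z) (at z)" for z
    proof -
      have "((\<lambda>z. r (-z)) has_real_derivative k (-z) * r (-z) * (-1)) (at z)"
        by (rule DERIV_chain2[OF d]) (auto intro!: derivative_eq_intros)
      thus ?thesis by (simp add: rho_def)
    qed
    have rhoc: "\<And>x. isCont rho x" using dr by (rule DERIV_isCont)
    obtain L where L: "\<forall>z\<in>{y..x0}. \<bar>k z\<bar> \<le> L" using bnd by blast
    have "\<bar>rho (-y)\<bar> * exp (-(L+1)*(-y)) \<le> \<bar>rho (-x0)\<bar> * exp (-(L+1)*(-x0))"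
      apply (rule prop_lemma[where L="L+1" and lo="-x0" and hi="-y" and r=rho and ?F1.0=rho and ?F2.0=rho and ?k1.0="\<lambda>z. - k (-z)" and ?k2.0="\<lambda>z. - k (-z)"])
      using rhoc False nz dr L by (auto intro!: continuous_at_imp_continuous_on simp: rho_def) (smt (verit, best) atLeastAtMost_iff)+
    thus False using z0 nz by (simp add: rho_def mult_le_0_iff)
  qed
qed




lemma cont_bound:
  fixes a :: "real \<Rightarrow> real"
  assumes "\<And>x. isCont a x"
  shows "\<exists>M. \<forall>z\<in>{lo..hi}. \<bar>a z\<bar> \<le> M"
proof -
  have "compact (a ` {lo..hi})"
    by (rule compact_continuous_image[OF continuous_at_imp_continuous_on compact_Icc]) (use assms in auto)
  hence "bounded (a ` {lo..hi})" by (rule compact_imp_bounded)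
  thus ?thesis unfolding bounded_real by auto
qed

lemma finish:
  fixes a r s k :: "real \<Rightarrow> real"
  assumes da: "\<And>\<xi>. (a has_real_derivative r \<xi>) (at \<xi>)"
    and dk: "\<And>z. (r has_real_derivative k z * r z) (at z)"
    and bnd: "\<And>lo hi. \<exists>L. \<forall>z\<in>{lo..hi}. \<bar>k z\<bar> \<le> L"
    and s0: "\<And>z. r z = 0 \<Longrightarrow> s z = 0"
    and nonconst: "\<not> (\<exists>c. \<forall>\<xi>. (a \<xi>, r \<xi>, s \<xi>) = c)"
  shows "r x \<noteq> 0"
proof
  assume "r x = 0"
  hence r0: "\<And>y. r y = 0" using zero_prop[OF dk bnd] by blast
  have "\<And>y. a y = a x" using DERIV_isconst_all[of a] da r0 by metis
  hence "\<forall>\<xi>. (a \<xi>, r \<xi>, s \<xi>) = (a x, 0, 0)" using r0 s0 by simp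
  thus False using nonconst by blast
qed




theorem lemma5:
  fixes v a0 :: real and a r s :: "real \<Rightarrow> real"
  assumes v_pos: "v > 0"
    and da: "\<And>\<xi>. (a has_real_derivative r \<xi>) (at \<xi>)"
    and dr: "\<And>\<xi>. (r has_real_derivative (- v * r \<xi> - s \<xi> * a \<xi> / 2 + a \<xi> * \<bar>r \<xi>\<bar> / 2)) (at \<xi>)"
    and ds: "\<And>\<xi>. (s has_real_derivative (- v * s \<xi> - r \<xi> * a \<xi>)) (at \<xi>)"
    and nonconst: "\<not> (\<exists>c. \<forall>\<xi>. (a \<xi>, r \<xi>, s \<xi>) = c)"
    and lim_a: "(a \<longlongrightarrow> a0) at_bot"
    and lim_r: "(r \<longlongrightarrow> 0) at_bot"
    and lim_s: "(s \<longlongrightarrow> 0) at_bot"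
  shows "\<forall>\<xi>. (r \<xi> > 0 \<and> s \<xi> = 2 * r \<xi>) \<or> (r \<xi> > 0 \<and> s \<xi> = - r \<xi>)
            \<or> (r \<xi> < 0 \<and> s \<xi> = r \<xi>) \<or> (r \<xi> < 0 \<and> s \<xi> = - 2 * r \<xi>)"
proof -
  have ac: "\<And>x. isCont a x" using da by (rule DERIV_isCont)
  have rc: "\<And>x. isCont r x" using dr by (rule DERIV_isCont)
  have sc: "\<And>x. isCont s x" using ds by (rule DERIV_isCont)
  have abnd: "\<And>lo hi. \<exists>M. \<forall>z\<in>{lo..hi}. \<bar>a z\<bar> \<le> M" using cont_bound[OF ac] by blast
  have dsr: "\<And>x c. ((\<lambda>z. s z + c * r z) has_real_derivative
     (- v * s x - r x * a x) + c * (- v * r x - s x * a x / 2 + a x * \<bar>r x\<bar> / 2)) (at x)"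
    by (intro DERIV_add ds DERIV_cmult dr)
  show ?thesis
  proof (cases "a0 > - v")
    case True
    define Phi where "Phi = (\<lambda>z. if 0 \<le> r z then s z + 1 * r z else s z + 2 * r z)"
    have Phi_alt: "Phi = (\<lambda>z. s z + r z + min (r z) 0)" unfolding Phi_def by (auto simp: fun_eq_iff)
    have P0: "Phi x = 0" for x
    proof (rule phi_zero[OF rc, where Phi=Phi and ?k1.0="\<lambda>z. - (v + a z / 2)" and ?k2.0="\<lambda>z. -(v + a z)"])
      show "\<And>z. Phi z = (if 0 \<le> r z then s z + 1 * r z else s z + 2 * r z)" by (simp add: Phi_def)
      show "continuous_on UNIV Phi" unfolding Phi_alt
        by (intro continuous_at_imp_continuous_on ballI continuous_intros ac rc sc)
      show "((\<lambda>z. s z + 1 * r z) has_real_derivative - (v + a x / 2) * (s x + 1 * r x)) (at x)" if "0 \<le> r x" for x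
        by (rule DERIV_cong[OF dsr]) (use that in \<open>simp add: algebra_simps\<close>)
      show "((\<lambda>z. s z + 2 * r z) has_real_derivative - (v + a x) * (s x + 2 * r x)) (at x)" if "r x \<le> 0" for x
        by (rule DERIV_cong[OF dsr]) (use that in \<open>simp add: algebra_simps abs_of_nonpos\<close>)
      show "s x + 1 * r x = s x + 2 * r x" if "r x = 0" for x using that by simp
      show "\<exists>L. \<forall>x\<in>{lo..hi}. - (v + a x / 2) < L \<and> - (v + a x) < L" for lo hi
      proof -
        obtain M where M: "\<forall>z\<in>{lo..hi}. \<bar>a z\<bar> \<le> M" using abnd by blast
        show ?thesis using M v_pos by (intro exI[of _ "M + 1"]) (auto simp: abs_le_iff)
      qed
      show "\<exists>T. \<forall>x\<le>T. - (v + a x / 2) < 0 \<and> - (v + a x) < 0"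
      proof -
        have "eventually (\<lambda>z. a z > -v) at_bot" using order_tendstoD(1)[OF lim_a True] .
        then obtain T where "\<forall>z\<le>T. a z > -v" unfolding eventually_at_bot_linorder by blast
        thus ?thesis using v_pos by (intro exI[of _ T]) auto
      qed
      show "(Phi \<longlongrightarrow> 0) at_bot" unfolding Phi_alt
        using tendsto_add[OF tendsto_add[OF lim_s lim_r] tendsto_min[OF lim_r tendsto_const[of 0]]] by simp
    qed
    have sp: "0 \<le> r z \<Longrightarrow> s z = - r z" "r z < 0 \<Longrightarrow> s z = - 2 * r z" for z
      using P0[of z] unfolding Phi_def by (auto split: if_splits)
    have nz: "r x \<noteq> 0" for x
    proof (rule finish[OF da _ _ _ nonconst, where k="\<lambda>z. if 0 \<le> r z then a z - v else a z / 2 - v"])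
      show "(r has_real_derivative (if 0 \<le> r z then a z - v else a z / 2 - v) * r z) (at z)" for z
        by (rule DERIV_cong[OF dr]) (cases "0 \<le> r z"; simp add: sp algebra_simps abs_of_nonpos)
      show "\<exists>L. \<forall>z\<in>{lo..hi}. \<bar>if 0 \<le> r z then a z - v else a z / 2 - v\<bar> \<le> L" for lo hi
      proof -
        obtain M where M: "\<forall>z\<in>{lo..hi}. \<bar>a z\<bar> \<le> M" using abnd by blast
        show ?thesis using M v_pos by (intro exI[of _ "M + v"]) (auto simp: abs_le_iff)
      qed
      show "r z = 0 \<Longrightarrow> s z = 0" for z using sp[of z] by simp
    qed
    show ?thesis
    proof
      fix x show "(r x > 0 \<and> s x = 2 * r x) \<or> (r x > 0 \<and> s x = - r x)
            \<or> (r x < 0 \<and> s x = r x) \<or> (r x < 0 \<and> s x = - 2 * r x)"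
        using nz[of x] sp[of x] by (cases "r x > 0") auto
    qed
  next
    case False
    hence a0v: "a0 < v" using v_pos by linarith
    define Phi where "Phi = (\<lambda>z. if 0 \<le> r z then s z + (-2) * r z else s z + (-1) * r z)"
    have Phi_alt: "Phi = (\<lambda>z. s z - r z - max (r z) 0)" unfolding Phi_def by (auto simp: fun_eq_iff)
    have P0: "Phi x = 0" for x
    proof (rule phi_zero[OF rc, where Phi=Phi and ?k1.0="\<lambda>z. a z - v" and ?k2.0="\<lambda>z. a z / 2 - v"])
      show "\<And>z. Phi z = (if 0 \<le> r z then s z + (-2) * r z else s z + (-1) * r z)" by (simp add: Phi_def)
      show "continuous_on UNIV Phi" unfolding Phi_alt
        by (intro continuous_at_imp_continuous_on ballI continuous_intros ac rc sc)
      show "((\<lambda>z. s z + (-2) * r z) has_real_derivative (a x - v) * (s x + (-2) * r x)) (at x)" if "0 \<le> r x" for x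
        by (rule DERIV_cong[OF dsr]) (use that in \<open>simp add: algebra_simps\<close>)
      show "((\<lambda>z. s z + (-1) * r z) has_real_derivative (a x / 2 - v) * (s x + (-1) * r x)) (at x)" if "r x \<le> 0" for x
        by (rule DERIV_cong[OF dsr]) (use that in \<open>simp add: abs_of_nonpos field_simps\<close>)
      show "s x + (-2) * r x = s x + (-1) * r x" if "r x = 0" for x using that by simp
      show "\<exists>L. \<forall>x\<in>{lo..hi}. a x - v < L \<and> a x / 2 - v < L" for lo hi
      proof -
        obtain M where M: "\<forall>z\<in>{lo..hi}. \<bar>a z\<bar> \<le> M" using abnd by blast
        show ?thesis using M v_pos by (intro exI[of _ "M + 1"]) (auto simp: abs_le_iff)
      qed
      show "\<exists>T. \<forall>x\<le>T. a x - v < 0 \<and> a x / 2 - v < 0"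
      proof -
        have "eventually (\<lambda>z. a z < v) at_bot" using order_tendstoD(2)[OF lim_a a0v] .
        then obtain T where "\<forall>z\<le>T. a z < v" unfolding eventually_at_bot_linorder by blast
        thus ?thesis using v_pos by (intro exI[of _ T]) auto
      qed
      show "(Phi \<longlongrightarrow> 0) at_bot" unfolding Phi_alt
        using tendsto_diff[OF tendsto_diff[OF lim_s lim_r] tendsto_max[OF lim_r tendsto_const[of 0]]] by simp
    qed
    have sp: "0 \<le> r z \<Longrightarrow> s z = 2 * r z" "r z < 0 \<Longrightarrow> s z = r z" for z
      using P0[of z] unfolding Phi_def by (auto split: if_splits)
    have nz: "r x \<noteq> 0" for x
    proof (rule finish[OF da _ _ _ nonconst, where k="\<lambda>z. if 0 \<le> r z then -(v + a z / 2) else -(v + a z)"])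
      show "(r has_real_derivative (if 0 \<le> r z then -(v + a z / 2) else -(v + a z)) * r z) (at z)" for z
        by (rule DERIV_cong[OF dr]) (cases "0 \<le> r z"; simp add: sp algebra_simps abs_of_nonpos)
      show "\<exists>L. \<forall>z\<in>{lo..hi}. \<bar>if 0 \<le> r z then -(v + a z / 2) else -(v + a z)\<bar> \<le> L" for lo hi
      proof -
        obtain M where M: "\<forall>z\<in>{lo..hi}. \<bar>a z\<bar> \<le> M" using abnd by blast
        show ?thesis using M v_pos by (intro exI[of _ "M + v"]) (auto simp: abs_le_iff)
      qed
      show "r z = 0 \<Longrightarrow> s z = 0" for z using sp[of z] by simp
    qed
    show ?thesis
    proof
      fix x show "(r x > 0 \<and> s x = 2 * r x) \<or> (r x > 0 \<and> s x = - r x)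
            \<or> (r x < 0 \<and> s x = r x) \<or> (r x < 0 \<and> s x = - 2 * r x)"
        using nz[of x] sp[of x] by (cases "r x > 0") auto
    qed
  qed
qed


end
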